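(* Let $n=2^s$, $q=2^r$ ($s,r$ positive integers), $N=|SL(n,q)|$, and let $\{C_i\}_{i=0}^N$ be the weight distribution of the code $C(SL(n,q))$. Then $C_i=C_{N-i}$ for $0\le i\le N$.
   Context: $Tr$ is the matrix trace; for a fixed ordering $g_1,\dots,g_N$ of $SL(n,q)$ and $v=(Tr(g_1),\dots,Tr(g_N))\in\mathbb{F}_q^N$, $C(SL(n,q))=\{u\in\mathbb{F}_2^N:u\cdot v=0\}$ (dot product in $\mathbb{F}_q$). $C_i$ is the number of codewords of Hamming weight $i$. *)

theory Defs
  imports "HOL-Analysis.Analysis"
begin

text \<open>The special linear group SL(n,q) as a set of n x n matrices over the
finite field 'a (n = CARD('n), q = CARD('a)).\<close>
definition SL_set :: "('a::field ^ 'n ^ 'n) set" where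
  "SL_set = {A. det A = 1}"

text \<open>A binary word u in F_2^N (indexed by the elements of SL(n,q)) is identified
with its support S, a subset of SL(n,q); its Hamming weight is card S and the
dot product u . v with v = (Tr g)_g computed in F_q is the sum of Tr g over g in S.
So C_i is the number of such supports of size i whose trace sum vanishes.\<close>
definition SL_code_weight :: "('a::field ^ 'n ^ 'n) itself \<Rightarrow> nat \<Rightarrow> nat" where
  "SL_code_weight _ i =
     card {S. S \<subseteq> (SL_set :: ('a ^ 'n ^ 'n) set) \<and> card S = i \<and> (\<Sum>g\<in>S. trace g) = 0}"

end

theory Submission
  imports Defs
begin

definition radd :: "'n \<Rightarrow> 'n \<Rightarrow> 'a::field \<Rightarrow> 'a^'n^'n \<Rightarrow> 'a^'n^'n" where
  "radd i j c g = (\<chi> k. if k = i then g$i + c *s g$j else g$k)"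

lemma radd_det:
  assumes "i \<noteq> j" shows "det (radd i j c g) = det g"
proof -
  have r: "\<And>k. row k g = g$k" by (simp add: row_def vec_eq_iff)
  show ?thesis using det_row_operation[OF assms, where c=c and A=g] unfolding r radd_def .
qed

lemma radd_inv:
  assumes "i \<noteq> j" shows "radd i j (-c) (radd i j c g) = g"
  using assms by (simp add: radd_def vec_eq_iff)

lemma SL_rowsum_zero:
  fixes j :: "'n::finite"
  assumes "i \<noteq> j"
  shows "(\<Sum>g\<in>(SL_set :: ('a::{field,finite}^'n^'n) set). g$j) = 0"
proof -
  let ?f = "radd i j (1::'a)"
  have bij: "bij_betw ?f SL_set SL_set"
    by (rule bij_betw_byWitness[where f' = "radd i j (-1)"])
       (auto simp: SL_set_def radd_det[OF assms] radd_inv[OF assms]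
             radd_inv[OF assms, of "-1", simplified])
  have "(\<Sum>g\<in>SL_set. ?f g) = (\<Sum>g\<in>(SL_set :: ('a^'n^'n) set). g)"
    using sum.reindex_bij_betw[OF bij, of "\<lambda>g. g"] by simp
  hence "(\<Sum>g\<in>SL_set. ?f g)$i = (\<Sum>g\<in>(SL_set :: ('a^'n^'n) set). g)$i" by simp
  hence "(\<Sum>g\<in>SL_set. g$i + g$j) = (\<Sum>g\<in>(SL_set :: ('a^'n^'n) set). g$i)"
    by (simp add: radd_def)
  thus ?thesis by (simp add: sum.distrib)
qed

lemma SL_trace_sum_zero:
  assumes "CARD('n::finite) \<ge> 2"
  shows "(\<Sum>g\<in>(SL_set :: ('a::{field,finite}^'n^'n) set). trace g) = 0"
proof -
  have "\<And>k::'n. (\<Sum>g\<in>(SL_set :: ('a^'n^'n) set). g$k$k) = 0"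
  proof -
    fix k :: 'n
    have "\<exists>i::'n. i \<noteq> k"
    proof (rule ccontr)
      assume "\<not> ?thesis"
      hence "UNIV = {k}" by auto
      thus False using assms by (metis card_1_singleton_iff numeral_le_one_iff semiring_norm(69) One_nat_def)
    qed
    then obtain i where "i \<noteq> k" by blast
    from SL_rowsum_zero[OF this, where 'a='a]
    have "(\<Sum>g\<in>(SL_set :: ('a^'n^'n) set). g$k)$k = 0" by simp
    thus "(\<Sum>g\<in>(SL_set :: ('a^'n^'n) set). g$k$k) = 0" by simp
  qed
  thus ?thesis unfolding trace_def by (subst sum.swap) simp
qed

theorem corollary17:
  fixes s r :: nat
  assumes "s > 0" and "r > 0"
    and "CARD('n::finite) = 2 ^ s"
    and "CARD('a::{field,finite}) = 2 ^ r"
  defines "N \<equiv> card (SL_set :: ('a ^ 'n ^ 'n) set)"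
  shows "\<forall>i\<le>N. SL_code_weight TYPE('a ^ 'n ^ 'n) i
                = SL_code_weight TYPE('a ^ 'n ^ 'n) (N - i)"
proof (intro allI impI)
  fix i assume iN: "i \<le> N"
  have "CARD('n) \<ge> 2" using assms(1,3)
    by (metis One_nat_def Suc_leI self_le_power one_less_numeral_iff semiring_norm(76) less_not_refl2 not_gr_zero power_one_right power_increasing le_numeral_extra(4) zero_less_numeral)
  hence tot: "(\<Sum>g\<in>(SL_set :: ('a^'n^'n) set). trace g) = 0" by (rule SL_trace_sum_zero)
  let ?SL = "SL_set :: ('a^'n^'n) set"
  have fin: "finite ?SL" by simp
  let ?A = "\<lambda>m. {S. S \<subseteq> ?SL \<and> card S = m \<and> (\<Sum>g\<in>S. trace g) = 0}"
  have "bij_betw (\<lambda>S. ?SL - S) (?A i) (?A (N - i))"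
  proof (rule bij_betw_byWitness[where f' = "\<lambda>S. ?SL - S"])
    show "\<forall>a\<in>?A i. ?SL - (?SL - a) = a" by auto
    show "\<forall>a\<in>?A (N-i). ?SL - (?SL - a) = a" by auto
    show "(\<lambda>S. ?SL - S) ` ?A i \<subseteq> ?A (N - i)"
    proof
      fix T assume "T \<in> (\<lambda>S. ?SL - S) ` ?A i"
      then obtain S where S: "S \<subseteq> ?SL" "card S = i" "(\<Sum>g\<in>S. trace g) = 0" and T: "T = ?SL - S" by auto
      have "card T = N - i" using T S fin by (simp add: card_Diff_subset N_def finite_subset)
      moreover have "(\<Sum>g\<in>T. trace g) = 0"
        using T S fin tot sum_diff[OF fin S(1), of trace] by simp
      ultimately show "T \<in> ?A (N - i)" using T by auto
    qed
    show "(\<lambda>S. ?SL - S) ` ?A (N - i) \<subseteq> ?A i"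
    proof
      fix T assume "T \<in> (\<lambda>S. ?SL - S) ` ?A (N - i)"
      then obtain S where S: "S \<subseteq> ?SL" "card S = N - i" "(\<Sum>g\<in>S. trace g) = 0" and T: "T = ?SL - S" by auto
      have "card T = i" using T S fin iN by (simp add: card_Diff_subset N_def finite_subset)
      moreover have "(\<Sum>g\<in>T. trace g) = 0"
        using T S fin tot sum_diff[OF fin S(1), of trace] by simp
      ultimately show "T \<in> ?A i" using T by auto
    qed
  qed
  from bij_betw_same_card[OF this] show "SL_code_weight TYPE('a ^ 'n ^ 'n) i
                = SL_code_weight TYPE('a ^ 'n ^ 'n) (N - i)"
    unfolding SL_code_weight_def by simp
qed

end
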